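(* Let $D, n \ge 1$, let $t_1, \dots, t_D$ be equally spaced real numbers, and let $\theta = (\theta_1, \theta_2, \theta_3) \in \mathbb{R}^3$ with $l = e^{\theta_1}$, $a^2 = e^{2\theta_2}$, $\sigma^2 = e^{2\theta_3}$. Let $A$ be the $D \times D$ matrix $A_{rs} = a^2 \exp\left(-(t_r - t_s)^2 / l\right)$, let $S$ be the $D\times D$ matrix $S_{rs} = (t_r - t_s)^2 / l$, let $J_n$ be the $n\times n$ all-ones matrix, and let $\hat{C} = \sigma^2 I_{nD} + J_n \otimes A$. Let $Z = (I_D + \sigma^{-2} n A)^{-1}$. For a data vector $X(\tau) \in \mathbb{R}^{nD}$ define $$\log p(X \mid \tau, \theta) = -\tfrac{1}{2} X(\tau)^T \hat{C}^{-1} X(\tau) - \tfrac{1}{2}\log\det \hat{C} - \tfrac{nD}{2}\log 2\pi .$$ Then $$\frac{\partial}{\partial\theta_1}\log p(X \mid \tau, \theta) = \frac{1}{2} X(\tau)^T \left(\sigma^{-4} J_n \otimes \big(Z (A\odot S) Z\big)\right) X(\tau) - \frac{1}{2}\operatorname{tr}\!\left(\hat{C}^{-1} \frac{\partial \hat{C}}{\partial \theta_1}\right),$$ where $$\operatorname{tr}\!\left(\hat{C}^{-1} \frac{\partial \hat{C}}{\partial \theta_1}\right) = \sigma^{-2} n \sum_i (A\odot S)_{ii} - \sigma^{-2} n \sum_{i,j} \left\{(I_D - Z) \odot (A\odot S)\right\}_{ij}.$$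
   Context: $\otimes$ is the Kronecker product and $\odot$ the Hadamard (entrywise) product. $X(\tau)$ is the concatenation $(x_1(t_1),\dots,x_1(t_D),\dots,x_n(t_1),\dots,x_n(t_D))$ of $n$ observation vectors of length $D$. The derivative is taken with $X(\tau)$ and $t_1,\dots,t_D$ fixed, with $A$, $\hat C$, $Z$ depending on $\theta$ through $l, a^2, \sigma^2$ as defined. *)

theory Defs
  imports "HOL-Analysis.Analysis"
begin

definition ell :: "real \<Rightarrow> real" where "ell th1 = exp th1"
definition asq :: "real \<Rightarrow> real" where "asq th2 = exp (2 * th2)"
definition sigsq :: "real \<Rightarrow> real" where "sigsq th3 = exp (2 * th3)"

definition Amat :: "('d::finite \<Rightarrow> real) \<Rightarrow> real \<Rightarrow> real \<Rightarrow> real^'d^'d" where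
  "Amat t th1 th2 = (\<chi> r s. asq th2 * exp (- ((t r - t s)^2 / ell th1)))"

definition Smat :: "('d::finite \<Rightarrow> real) \<Rightarrow> real \<Rightarrow> real^'d^'d" where
  "Smat t th1 = (\<chi> r s. (t r - t s)^2 / ell th1)"

definition Jmat :: "real^'n^'n" where "Jmat = (\<chi> i j. 1)"

text \<open>Kronecker product; the index (i,r) stands for position (i-1)D + r of the concatenation.\<close>
definition kron :: "real^'n^'n \<Rightarrow> real^'d^'d \<Rightarrow> real^('n \<times> 'd)^('n \<times> 'd)" where
  "kron P Q = (\<chi> p q. P $ fst p $ fst q * Q $ snd p $ snd q)"

definition hadamard :: "real^'m^'k \<Rightarrow> real^'m^'k \<Rightarrow> real^'m^'k" where
  "hadamard P Q = (\<chi> i j. P $ i $ j * Q $ i $ j)"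

definition Chat :: "('d::finite \<Rightarrow> real) \<Rightarrow> real \<Rightarrow> real \<Rightarrow> real \<Rightarrow> real^('n::finite \<times> 'd)^('n \<times> 'd)" where
  "Chat t th1 th2 th3 = sigsq th3 *\<^sub>R mat 1 + kron Jmat (Amat t th1 th2)"

definition Zmat :: "nat \<Rightarrow> ('d::finite \<Rightarrow> real) \<Rightarrow> real \<Rightarrow> real \<Rightarrow> real \<Rightarrow> real^'d^'d" where
  "Zmat n t th1 th2 th3 = matrix_inv (mat 1 + (real n / sigsq th3) *\<^sub>R Amat t th1 th2)"

definition logp :: "real^('n::finite \<times> 'd::finite) \<Rightarrow> ('d \<Rightarrow> real) \<Rightarrow> real \<Rightarrow> real \<Rightarrow> real \<Rightarrow> real" where
  "logp X t th1 th2 th3 =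
     - (1/2) * (X \<bullet> (matrix_inv (Chat t th1 th2 th3 :: real^('n \<times> 'd)^('n \<times> 'd)) *v X))
     - (1/2) * ln (det (Chat t th1 th2 th3 :: real^('n \<times> 'd)^('n \<times> 'd)))
     - (real (CARD('n) * CARD('d)) / 2) * ln (2 * pi)"

definition dChat :: "('d::finite \<Rightarrow> real) \<Rightarrow> real \<Rightarrow> real \<Rightarrow> real \<Rightarrow> real^('n::finite \<times> 'd)^('n \<times> 'd)" where
  "dChat t th1 th2 th3 = (\<chi> p q. deriv (\<lambda>x. (Chat t x th2 th3 :: real^('n \<times> 'd)^('n \<times> 'd)) $ p $ q) th1)"

end

theory Submission
  imports Defs
begin

lemma matrix_inv_props:
  fixes A :: "'a::semiring_1^'n^'n"
  assumes "invertible A"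
  shows "A ** matrix_inv A = mat 1" "matrix_inv A ** A = mat 1"
  using someI_ex[OF assms[unfolded invertible_def]] unfolding matrix_inv_def by auto

lemma matrix_inv_eq:
  fixes A B :: "'a::semiring_1^'n^'n"
  assumes "A ** B = mat 1" "B ** A = mat 1"
  shows "matrix_inv A = B"
proof -
  have inv: "invertible A" using assms unfolding invertible_def by blast
  have "B = B ** (A ** matrix_inv A)" using matrix_inv_props(1)[OF inv] by simp
  also have "\<dots> = (B ** A) ** matrix_inv A" by (simp add: matrix_mul_assoc)
  also have "\<dots> = matrix_inv A" using assms by simp
  finally show ?thesis by simp
qed

definition detD :: "real^'k^'k \<Rightarrow> real^'k^'k \<Rightarrow> real" where
  "detD M M' = (\<Sum>p\<in>{p. p permutes (UNIV::'k set)}. of_int (sign p) *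
      (\<Sum>i\<in>UNIV. M' $ i $ p i * (\<Prod>j\<in>UNIV - {i}. M $ j $ p j)))"

lemma det_has_deriv:
  fixes M :: "real \<Rightarrow> real^'k::finite^'k"
  assumes "\<And>i j. ((\<lambda>x. M x $ i $ j) has_real_derivative M' $ i $ j) (at x)"
  shows "((\<lambda>x. det (M x)) has_real_derivative detD (M x) M') (at x)"
  unfolding det_def detD_def
  by (intro DERIV_sum DERIV_cmult has_field_derivative_prod assms)


lemma detD_row:
  fixes M M' :: "real^'k::finite^'k"
  shows "detD M M' = (\<Sum>i\<in>UNIV. det ((\<chi> k. if k = i then row i M' else row k M) :: real^'k^'k))"
proof -
  have "detD M M' = (\<Sum>i\<in>UNIV. \<Sum>p\<in>{p. p permutes (UNIV::'k set)}. of_int (sign p) *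
      (M' $ i $ p i * (\<Prod>j\<in>UNIV - {i}. M $ j $ p j)))"
    unfolding detD_def by (subst sum.swap) (simp add: sum_distrib_left)
  also have "\<dots> = (\<Sum>i\<in>UNIV. det ((\<chi> k. if k = i then row i M' else row k M) :: real^'k^'k))"
  proof (rule sum.cong[OF refl])
    fix i :: 'k
    show "(\<Sum>p\<in>{p. p permutes (UNIV::'k set)}. of_int (sign p) *
      (M' $ i $ p i * (\<Prod>j\<in>UNIV - {i}. M $ j $ p j))) = det ((\<chi> k. if k = i then row i M' else row k M) :: real^'k^'k)"
      unfolding det_def
    proof (rule sum.cong[OF refl])
      fix p
      have "(\<Prod>k\<in>UNIV. (\<chi> k. if k = i then row i M' else row k M) $ k $ p k) =
        (\<chi> k. if k = i then row i M' else row k M) $ i $ p i * (\<Prod>k\<in>UNIV-{i}. (\<chi> k. if k = i then row i M' else row k M) $ k $ p k)"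
        by (rule prod.remove) auto
      also have "\<dots> = M' $ i $ p i * (\<Prod>j\<in>UNIV - {i}. M $ j $ p j)"
        by (auto simp: row_def intro!: prod.cong)
      finally show "of_int (sign p) * (M' $ i $ p i * (\<Prod>j\<in>UNIV - {i}. M $ j $ p j)) =
         of_int (sign p) * (\<Prod>k\<in>UNIV. (\<chi> k. if k = i then row i M' else row k M) $ k $ p k)" by simp
    qed
  qed
  finally show ?thesis .
qed

lemma row_matrix_mult: "row i (F ** (N::real^'k::finite^'k)) = (\<Sum>k\<in>UNIV. F $ i $ k *s row k N)"
  by (simp add: row_def matrix_matrix_mult_def vec_eq_iff sum_component)

lemma det_row_replace:
  fixes N F :: "real^'k::finite^'k"
  shows "det ((\<chi> k. if k = i then row i (F ** N) else row k N) :: real^'k^'k) = F $ i $ i * det N"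
proof -
  let ?A = "(\<chi> k. if k = i then F $ i $ i *s row i N else row k N) :: real^'k^'k"
  let ?x = "(\<Sum>k\<in>UNIV-{i}. F $ i $ k *s row k N)"
  have rA: "row j ?A = row j N" if "j \<noteq> i" for j using that by (simp add: row_def)
  have x: "?x \<in> vec.span {row j ?A |j. j \<noteq> i}"
  proof (rule vec.span_sum)
    fix k assume "k \<in> UNIV - {i}"
    then have "row k N \<in> {row j ?A |j. j \<noteq> i}" using rA[of k] by force
    then show "F $ i $ k *s row k N \<in> vec.span {row j ?A |j. j \<noteq> i}"
      by (intro vec.span_scale vec.span_base)
  qed
  have rowi: "row i (F ** N) = row i ?A + ?x"
    unfolding row_matrix_mult by (simp add: sum.remove[of UNIV i] row_def vec_eq_iff)
  have "det ((\<chi> k. if k = i then row i (F ** N) else row k N) :: real^'k^'k)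
      = det ((\<chi> k. if k = i then row i ?A + ?x else row k ?A) :: real^'k^'k)"
    by (rule arg_cong[where f=det]) (simp add: vec_eq_iff rowi rA)
  also have "\<dots> = det ?A" by (rule det_row_span[OF x])
  also have "\<dots> = F $ i $ i * det ((\<chi> k. if k = i then row i N else row k N) :: real^'k^'k)"
    by (rule det_row_mul)
  also have "((\<chi> k. if k = i then row i N else row k N) :: real^'k^'k) = N"
    by (simp add: vec_eq_iff row_def)
  finally show ?thesis .
qed

lemma jacobi:
  fixes N N' :: "real^'k::finite^'k"
  assumes "invertible N"
  shows "detD N N' = det N * trace (matrix_inv N ** N')"
proof -
  let ?F = "N' ** matrix_inv N"
  have "?F ** N = N'" by (simp add: matrix_mul_assoc[symmetric] matrix_inv_props(2)[OF assms])
  then have NF: "N' = ?F ** N" by simp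
  have "detD N N' = (\<Sum>i\<in>UNIV. ?F $ i $ i * det N)"
    unfolding detD_row by (subst NF, subst det_row_replace, simp)
  also have "\<dots> = det N * trace ?F" by (simp add: trace_def sum_distrib_left mult.commute)
  also have "trace ?F = trace (matrix_inv N ** N')" by (rule trace_mul_sym)
  finally show ?thesis .
qed


lemma matrix_inv_entry:
  fixes A :: "real^'k::finite^'k"
  assumes "invertible A"
  shows "matrix_inv A $ k $ j =
    det ((\<chi> a b. if b = k then (if a = j then 1 else 0) else A $ a $ b) :: real^'k^'k) / det A"
proof -
  let ?b = "(\<chi> a. if a = j then 1 else 0) :: real^'k"
  have d: "det A \<noteq> 0" using assms invertible_det_nz by blast
  have "A *v (matrix_inv A *v ?b) = ?b"
    by (simp add: matrix_vector_mul_assoc matrix_inv_props(1)[OF assms])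
  then have "matrix_inv A *v ?b = (\<chi> k. det(\<chi> i jj. if jj=k then ?b$i else A$i$jj) / det A)"
    using cramer[OF d] by blast
  then have "(matrix_inv A *v ?b) $ k = det(\<chi> i jj. if jj=k then ?b$i else A$i$jj) / det A"
    by simp
  moreover have "(matrix_inv A *v ?b) $ k = matrix_inv A $ k $ j"
    by (simp add: matrix_vector_mult_def if_distrib cong: if_cong)
  moreover have "(\<chi> i jj. if jj=k then ?b$i else A$i$jj) = ((\<chi> a b. if b = k then (if a = j then 1 else 0) else A $ a $ b) :: real^'k^'k)"
    by (simp add: vec_eq_iff)
  ultimately show ?thesis by simp
qed

lemma matrix_mul_rneg: "(A::real^'n::finite^'m) ** (- B) = - (A ** (B::real^'p^'n))"
  by (simp add: vec_eq_iff matrix_matrix_mult_def sum_negf)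

lemma inv_has_deriv:
  fixes M :: "real \<Rightarrow> real^'k::finite^'k"
  assumes der: "\<And>i j. ((\<lambda>x. M x $ i $ j) has_real_derivative M' $ i $ j) (at x)"
    and inv: "\<And>y. invertible (M y)"
  shows "((\<lambda>y. matrix_inv (M y) $ i $ j) has_real_derivative
           (- (matrix_inv (M x) ** M' ** matrix_inv (M x))) $ i $ j) (at x)"
proof -
  define Q where "Q = (\<lambda>k j y. (\<chi> a b. if b = k then (if a = j then 1 else 0) else M y $ a $ b) :: real^'k^'k)"
  define Q' where "Q' = (\<lambda>k. (\<chi> a b. if b = k then 0 else M' $ a $ b) :: real^'k^'k)"
  define Dm where "Dm = (\<chi> k j. (detD (Q k j x) (Q' k) * det (M x) - det (Q k j x) * detD (M x) M') / (det (M x) * det (M x)))"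
  have dnz: "det (M y) \<noteq> 0" for y using inv invertible_det_nz by blast
  have Dm: "((\<lambda>y. matrix_inv (M y) $ k $ j) has_real_derivative Dm $ k $ j) (at x)" for k j
  proof -
    have e: "(\<lambda>y. matrix_inv (M y) $ k $ j) = (\<lambda>y. det (Q k j y) / det (M y))"
      using matrix_inv_entry[OF inv] unfolding Q_def by auto
    have q: "((\<lambda>y. Q k j y $ a $ b) has_real_derivative Q' k $ a $ b) (at x)" for a b
      unfolding Q_def Q'_def by (auto intro: der)
    show ?thesis unfolding e Dm_def
      by (simp, rule DERIV_divide[OF det_has_deriv[OF q] det_has_deriv[OF der] dnz])
  qed
  let ?Mi = "\<lambda>y. matrix_inv (M y)"
  have zero: "(M' ** ?Mi x + M x ** Dm) $ a $ b = 0" for a b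
  proof -
    have "((\<lambda>y. (M y ** ?Mi y) $ a $ b) has_real_derivative (M' ** ?Mi x + M x ** Dm) $ a $ b) (at x)"
      unfolding matrix_matrix_mult_def
      by (simp, rule DERIV_cong[OF DERIV_sum], rule DERIV_mult[OF der Dm],
          simp add: sum.distrib algebra_simps)
    moreover have "(\<lambda>y. (M y ** ?Mi y) $ a $ b) = (\<lambda>y. mat 1 $ a $ b)"
      using matrix_inv_props(1)[OF inv] by simp
    ultimately have "((\<lambda>y. mat 1 $ a $ b) has_real_derivative (M' ** ?Mi x + M x ** Dm) $ a $ b) (at x)"
      by simp
    then show ?thesis using DERIV_const DERIV_unique by blast
  qed
  then have z: "M' ** ?Mi x + M x ** Dm = 0" by (simp add: vec_eq_iff)
  have "Dm = ?Mi x ** (M x ** Dm)"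
    by (simp add: matrix_mul_assoc matrix_inv_props(2)[OF inv])
  also have "M x ** Dm = - (M' ** ?Mi x)" using z by (simp add: eq_neg_iff_add_eq_0 add.commute)
  finally have "Dm = - (?Mi x ** M' ** ?Mi x)"
    by (simp add: matrix_mul_assoc matrix_mul_rneg)
  then show ?thesis using Dm by simp
qed


lemma posdef_invertible:
  fixes P :: "real^'k::finite^'k"
  assumes pd: "\<And>v. v \<noteq> 0 \<Longrightarrow> v \<bullet> (P *v v) > 0"
  shows "invertible P"
proof -
  have "\<forall>x. P *v x = 0 \<longrightarrow> x = 0"
  proof (intro allI impI)
    fix x assume "P *v x = 0"
    then show "x = 0" using pd[of x] by (cases "x = 0") auto
  qed
  then show ?thesis unfolding invertible_left_inverse matrix_left_invertible_ker[symmetric] .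
qed

lemma scaleR_mv: "((c::real) *\<^sub>R (A::real^'n::finite^'m)) *v v = c *\<^sub>R (A *v v)"
  by (simp add: vec_eq_iff matrix_vector_mult_def sum_distrib_left mult.assoc)

lemma posdef_det_pos:
  fixes P :: "real^'k::finite^'k"
  assumes pd: "\<And>v. v \<noteq> 0 \<Longrightarrow> v \<bullet> (P *v v) > 0"
  shows "det P > 0"
proof (rule ccontr)
  assume neg: "\<not> det P > 0"
  define M where "M = (\<lambda>s::real. (1 - s) *\<^sub>R mat 1 + s *\<^sub>R P)"
  define g where "g = (\<lambda>s. det (M s))"
  have pdM: "v \<bullet> (M s *v v) > 0" if "v \<noteq> 0" "0 \<le> s" "s \<le> 1" for v s
  proof -
    have "v \<bullet> (M s *v v) = (1 - s) * (v \<bullet> v) + s * (v \<bullet> (P *v v))"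
      unfolding M_def by (simp add: matrix_vector_mult_add_rdistrib inner_add_right scaleR_mv)
    moreover have "v \<bullet> v > 0" using that by simp
    moreover have "v \<bullet> (P *v v) > 0" using pd that by simp
    ultimately show ?thesis using that
    proof (cases "s = 0")
      case False
      then have "s > 0" using that by simp
      then show ?thesis using \<open>v \<bullet> (P *v v) > 0\<close> \<open>v \<bullet> v > 0\<close> that
        unfolding \<open>v \<bullet> (M s *v v) = _\<close>
        by (intro add_nonneg_pos mult_nonneg_nonneg mult_pos_pos) auto
    qed simp
  qed
  have cont: "isCont g s" for s
  proof -
    have "((\<lambda>s. M s $ i $ j) has_real_derivative (P - mat 1) $ i $ j) (at s)" for i j
      unfolding M_def by (auto intro!: derivative_eq_intros simp: mat_def)
    then show ?thesis unfolding g_def by (rule DERIV_isCont[OF det_has_deriv])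
  qed
  have "g 1 \<le> 0" using neg unfolding g_def M_def by simp
  moreover have "0 \<le> g 0" unfolding g_def M_def by simp
  ultimately obtain s where s: "0 \<le> s" "s \<le> 1" "g s = 0"
    using IVT2[of g 1 0 0] cont by auto
  have "invertible (M s)" by (rule posdef_invertible) (use pdM s in auto)
  then show False using s(3) invertible_det_nz unfolding g_def by auto
qed


lemma exp_kernel_psd:
  fixes w u :: "'k::finite \<Rightarrow> real"
  shows "0 \<le> (\<Sum>r\<in>UNIV. \<Sum>s\<in>UNIV. w r * w s * exp (u r * u s))"
proof -
  have "(\<lambda>n. \<Sum>r\<in>UNIV. \<Sum>s\<in>UNIV. w r * w s * ((u r * u s) ^ n / fact n))
          sums (\<Sum>r\<in>UNIV. \<Sum>s\<in>UNIV. w r * w s * exp (u r * u s))"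
  proof (intro sums_sum)
    fix r s
    have "(\<lambda>n. (u r * u s) ^ n / fact n) sums exp (u r * u s)"
      using exp_converges[of "u r * u s"] by (simp add: divide_inverse mult.commute)
    then show "(\<lambda>n. w r * w s * ((u r * u s) ^ n / fact n)) sums (w r * w s * exp (u r * u s))"
      by (rule sums_mult)
  qed
  moreover have "(\<Sum>r\<in>UNIV. \<Sum>s\<in>UNIV. w r * w s * ((u r * u s) ^ n / fact n)) =
      (\<Sum>r\<in>UNIV. w r * u r ^ n)^2 / fact n" for n
    by (simp add: power2_eq_square sum_product sum_divide_distrib power_mult_distrib mult_ac)
  ultimately have "(\<lambda>n. (\<Sum>r\<in>UNIV. w r * u r ^ n)^2 / fact n)
          sums (\<Sum>r\<in>UNIV. \<Sum>s\<in>UNIV. w r * w s * exp (u r * u s))" (is "?f sums ?S") by simp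
  have "\<And>n. 0 \<le> ?f n" by simp
  from sums_le[OF this sums_zero \<open>?f sums ?S\<close>] show ?thesis .
qed

lemma Amat_psd:
  fixes t :: "'d::finite \<Rightarrow> real"
  shows "0 \<le> y \<bullet> (Amat t th1 th2 *v y)"
proof -
  define l where "l = ell th1"
  have l: "l > 0" unfolding l_def ell_def by simp
  define u where "u = (\<lambda>r. sqrt (2 / l) * t r)"
  define w where "w = (\<lambda>r. y $ r * exp (- ((t r)^2 / l)))"
  have e: "exp (- ((t r - t s)^2 / l)) = exp (- ((t r)^2 / l)) * exp (- ((t s)^2 / l)) * exp (u r * u s)" for r s
  proof -
    have "u r * u s = 2 * t r * t s / l" unfolding u_def using l
      by (simp add: mult_ac)
    then show ?thesis
      using l by (simp add: exp_add[symmetric] power2_eq_square field_simps)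
  qed
  have "y \<bullet> (Amat t th1 th2 *v y) = asq th2 * (\<Sum>r\<in>UNIV. \<Sum>s\<in>UNIV. w r * w s * exp (u r * u s))"
    unfolding Amat_def inner_vec_def matrix_vector_mult_def w_def l_def[symmetric]
    by (simp add: e sum_distrib_left mult_ac)
  also have "\<dots> \<ge> 0" using exp_kernel_psd[of w u] by (simp add: asq_def)
  finally show ?thesis .
qed


lemma mm_add_l: "((A::real^'n::finite^'m) + B) ** (C::real^'p^'n) = A ** C + B ** C"
  by (simp add: vec_eq_iff matrix_matrix_mult_def sum.distrib distrib_right)
lemma mm_add_r: "(A::real^'n::finite^'m) ** ((B::real^'p^'n) + C) = A ** B + A ** C"
  by (rule matrix_add_ldistrib)
lemma mm_diff_l: "((A::real^'n::finite^'m) - B) ** (C::real^'p^'n) = A ** C - B ** C"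
  by (simp add: vec_eq_iff matrix_matrix_mult_def sum_subtractf left_diff_distrib)
lemma mm_diff_r: "(A::real^'n::finite^'m) ** ((B::real^'p^'n) - C) = A ** B - A ** C"
  by (simp add: vec_eq_iff matrix_matrix_mult_def sum_subtractf right_diff_distrib)
lemma mm_scale_l: "((k::real) *\<^sub>R (A::real^'n::finite^'m)) ** (B::real^'p^'n) = k *\<^sub>R (A ** B)"
  by (simp add: scalar_matrix_assoc)
lemma mm_scale_r: "(A::real^'n::finite^'m) ** ((k::real) *\<^sub>R (B::real^'p^'n)) = k *\<^sub>R (A ** B)"
  by (simp add: vec_eq_iff matrix_matrix_mult_def sum_distrib_left mult_ac)

lemma kron_mult:
  fixes P P' :: "real^'n::finite^'n" and Q Q' :: "real^'d::finite^'d"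
  shows "kron P Q ** kron P' Q' = kron (P ** P') (Q ** Q')"
proof -
  have "(\<Sum>k\<in>(UNIV::('n\<times>'d) set). f k) = (\<Sum>i\<in>UNIV. \<Sum>r\<in>UNIV. f (i, r))" for f :: "'n\<times>'d \<Rightarrow> real"
    by (simp add: sum.cartesian_product UNIV_Times_UNIV[symmetric] del: UNIV_Times_UNIV)
  then show ?thesis
    apply (simp add: vec_eq_iff matrix_matrix_mult_def kron_def sum_product mult_ac)
    apply (intro allI)
    apply (subst sum.swap)
    apply (simp add: mult_ac)
    done
qed

lemma Jmat_sq: "(Jmat :: real^'n::finite^'n) ** Jmat = real CARD('n) *\<^sub>R Jmat"
  by (simp add: vec_eq_iff matrix_matrix_mult_def Jmat_def)

lemma kron_scale_out: "k *\<^sub>R kron P Q = kron P (k *\<^sub>R Q)"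
  by (simp add: vec_eq_iff kron_def)
lemma kron_scale_l: "kron (k *\<^sub>R P) Q = kron P (k *\<^sub>R Q)"
  by (simp add: vec_eq_iff kron_def)
lemma kron_add: "kron P Q + kron P Q' = kron P (Q + Q')"
  by (simp add: vec_eq_iff kron_def distrib_left)
lemma kron_diff: "kron P Q - kron P Q' = kron P (Q - Q')"
  by (simp add: vec_eq_iff kron_def right_diff_distrib)

lemma trace_kron: "trace (kron (P::real^'n::finite^'n) (Q::real^'d::finite^'d)) = trace P * trace Q"
proof -
  have "(\<Sum>k\<in>(UNIV::('n\<times>'d) set). f k) = (\<Sum>i\<in>UNIV. \<Sum>r\<in>UNIV. f (i, r))" for f :: "'n\<times>'d \<Rightarrow> real"
    by (simp add: sum.cartesian_product UNIV_Times_UNIV[symmetric] del: UNIV_Times_UNIV)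
  then show ?thesis by (simp add: trace_def kron_def sum_product)
qed

lemma trace_Jmat: "trace (Jmat :: real^'n::finite^'n) = real CARD('n)"
  by (simp add: trace_def Jmat_def)

lemma kron_quad:
  fixes A :: "real^'d::finite^'d" and v :: "real^('n::finite \<times> 'd)"
  shows "v \<bullet> (kron (Jmat::real^'n^'n) A *v v) = (\<chi> r. \<Sum>i\<in>UNIV. v $ (i, r)) \<bullet> (A *v (\<chi> r. \<Sum>i\<in>UNIV. v $ (i, r)))"
proof -
  have S: "(\<Sum>k\<in>(UNIV::('n\<times>'d) set). f k) = (\<Sum>i\<in>UNIV. \<Sum>r\<in>UNIV. f (i, r))" for f :: "'n\<times>'d \<Rightarrow> real"
    by (simp add: sum.cartesian_product UNIV_Times_UNIV[symmetric] del: UNIV_Times_UNIV)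
  define y where "y = (\<chi> r. \<Sum>i\<in>UNIV. v $ (i, r))"
  have Kv: "(kron (Jmat::real^'n^'n) A *v v) $ p = (A *v y) $ snd p" for p
  proof -
    have "(kron (Jmat::real^'n^'n) A *v v) $ p = (\<Sum>j\<in>UNIV. \<Sum>s\<in>UNIV. A $ snd p $ s * v $ (j, s))"
      by (simp add: matrix_vector_mult_def kron_def Jmat_def S)
    also have "\<dots> = (\<Sum>s\<in>UNIV. \<Sum>j\<in>UNIV. A $ snd p $ s * v $ (j, s))" by (rule sum.swap)
    also have "\<dots> = (A *v y) $ snd p" by (simp add: matrix_vector_mult_def y_def sum_distrib_left)
    finally show ?thesis .
  qed
  have "v \<bullet> (kron (Jmat::real^'n^'n) A *v v) = (\<Sum>i\<in>UNIV. \<Sum>r\<in>UNIV. v $ (i, r) * (A *v y) $ r)"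
    by (simp add: inner_vec_def Kv S)
  also have "\<dots> = (\<Sum>r\<in>UNIV. \<Sum>i\<in>UNIV. v $ (i, r) * (A *v y) $ r)" by (rule sum.swap)
  also have "\<dots> = y \<bullet> (A *v y)" by (simp add: inner_vec_def y_def sum_distrib_right)
  finally show ?thesis unfolding y_def .
qed


lemma kron_add_r: "kron P (X + Y) = kron P X + kron P Y"
  by (simp add: vec_eq_iff kron_def distrib_left)
lemma kron_diff_r: "kron P (X - Y) = kron P X - kron P Y"
  by (simp add: vec_eq_iff kron_def right_diff_distrib)
lemma kron_scale_in: "kron P (c *\<^sub>R X) = c *\<^sub>R kron P X"
  by (simp add: vec_eq_iff kron_def)
lemma kron_scale_l2: "kron (c *\<^sub>R P) X = c *\<^sub>R kron P X"
  by (simp add: vec_eq_iff kron_def)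
lemma kron_zero: "kron P 0 = 0"
  by (simp add: vec_eq_iff kron_def)

lemmas malg = mm_add_l mm_add_r mm_diff_l mm_diff_r mm_scale_l mm_scale_r kron_mult Jmat_sq
  kron_add_r kron_diff_r kron_scale_in kron_scale_l2 matrix_mul_assoc[symmetric]

lemma Cinv_formula:
  fixes A B :: "real^'d::finite^'d" and s2 :: real
  assumes s2: "s2 > 0" and invW: "invertible (mat 1 + (real CARD('n::finite) / s2) *\<^sub>R A)"
  defines "Z \<equiv> matrix_inv (mat 1 + (real CARD('n) / s2) *\<^sub>R A)"
  defines "G \<equiv> inverse s2 *\<^sub>R mat 1 - kron (Jmat::real^'n^'n) (inverse (s2^2) *\<^sub>R (Z ** A))"
  shows "matrix_inv (s2 *\<^sub>R mat 1 + kron (Jmat::real^'n^'n) A) = G"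
    and "G ** kron (Jmat::real^'n^'n) B = kron Jmat (inverse s2 *\<^sub>R (Z ** B))"
    and "G ** kron (Jmat::real^'n^'n) B ** G = kron Jmat (inverse (s2^2) *\<^sub>R (Z ** B ** Z))"
proof -
  let ?N = "real CARD('n)"
  let ?W = "mat 1 + (?N / s2) *\<^sub>R A"
  let ?J = "Jmat::real^'n^'n"
  have ZW: "Z ** ?W = mat 1" and WZ: "?W ** Z = mat 1"
    using matrix_inv_props[OF invW] unfolding Z_def by auto
  have ZW': "Z + (?N / s2) *\<^sub>R (Z ** A) = mat 1" using ZW by (simp add: malg)
  have WZ': "Z + (?N / s2) *\<^sub>R (A ** Z) = mat 1" using WZ by (simp add: malg)
  have sq: "s2 * inverse (s2^2) = inverse s2" using s2 by (simp add: power2_eq_square)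
  have sq3: "inverse s2 * inverse s2 = inverse (s2^2)" using s2 by (simp add: power2_eq_square)
  have s2nz: "s2 \<noteq> 0" using s2 by simp
  have "(s2 *\<^sub>R mat 1 + kron ?J A) ** G = mat 1 + kron ?J (inverse s2 *\<^sub>R A - inverse s2 *\<^sub>R (Z ** A) - (?N * inverse(s2^2)) *\<^sub>R (A ** (Z ** A)))"
    unfolding G_def using s2nz by (simp add: malg sq algebra_simps)
  also have "inverse s2 *\<^sub>R A - inverse s2 *\<^sub>R (Z ** A) - (?N * inverse(s2^2)) *\<^sub>R (A ** (Z ** A)) = 0"
  proof -
    have "(Z + (?N / s2) *\<^sub>R (A ** Z)) ** A = A" using WZ' by simp
    then have "A = Z ** A + (?N / s2) *\<^sub>R (A ** (Z ** A))" by (simp add: malg)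
    then have "inverse s2 *\<^sub>R A = inverse s2 *\<^sub>R (Z ** A + (?N / s2) *\<^sub>R (A ** (Z ** A)))" by simp
    then show ?thesis by (simp add: algebra_simps sq3[symmetric] divide_inverse)
  qed
  finally have CG: "(s2 *\<^sub>R mat 1 + kron ?J A) ** G = mat 1" by (simp add: kron_zero)
  then have GC: "G ** (s2 *\<^sub>R mat 1 + kron ?J A) = mat 1" using matrix_left_right_inverse by blast
  show "matrix_inv (s2 *\<^sub>R mat 1 + kron ?J A) = G" by (rule matrix_inv_eq[OF CG GC])
  have ZB: "Z ** B = B - (?N / s2) *\<^sub>R (Z ** (A ** B))"
  proof -
    have "(Z + (?N / s2) *\<^sub>R (Z ** A)) ** B = B" using ZW' by simp
    then show ?thesis by (simp add: malg algebra_simps)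
  qed
  show GB: "G ** kron ?J B = kron ?J (inverse s2 *\<^sub>R (Z ** B))"
    unfolding G_def ZB using s2nz by (simp add: malg sq algebra_simps power2_eq_square divide_inverse)
  have ZBZ: "Z ** (B ** Z) = Z ** B - (?N / s2) *\<^sub>R (Z ** (B ** (Z ** A)))"
  proof -
    have "Z ** B ** (Z + (?N / s2) *\<^sub>R (Z ** A)) = Z ** B" using ZW' by simp
    then show ?thesis by (simp add: malg algebra_simps)
  qed
  show "G ** kron ?J B ** G = kron ?J (inverse (s2^2) *\<^sub>R (Z ** B ** Z))"
    unfolding GB unfolding G_def using s2nz
    by (simp add: malg ZBZ algebra_simps power2_eq_square divide_inverse)
qed


lemma Chat_entry_deriv:
  fixes t :: "'d::finite \<Rightarrow> real"
  shows "((\<lambda>x. (Chat t x th2 th3 :: real^('n::finite \<times> 'd)^('n \<times> 'd)) $ p $ q) has_real_derivative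
     kron (Jmat::real^'n^'n) (hadamard (Amat t x0 th2) (Smat t x0)) $ p $ q) (at x0)"
proof -
  have e: "(\<lambda>x. (Chat t x th2 th3 :: real^('n \<times> 'd)^('n \<times> 'd)) $ p $ q) =
     (\<lambda>x. sigsq th3 * mat 1 $ p $ q + asq th2 * exp (- ((t (snd p) - t (snd q))^2 / exp x)))"
    by (simp add: Chat_def kron_def Jmat_def Amat_def ell_def)
  show ?thesis unfolding e
    by (auto intro!: derivative_eq_intros simp: kron_def Jmat_def hadamard_def Amat_def Smat_def ell_def
        field_simps power2_eq_square)
qed


lemma neg_mv: "(- (M::real^'n::finite^'m)) *v x = - (M *v x)"
  by (simp add: vec_eq_iff matrix_vector_mult_def sum_negf)

theorem proposition1:
  fixes t :: "'d::finite \<Rightarrow> real"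
    and X :: "real^('n::finite \<times> 'd)"
    and th1 th2 th3 :: real
  assumes equally_spaced: "\<exists>idx c h. bij_betw idx (UNIV :: 'd set) {..<CARD('d)} \<and>
                              (\<forall>r. t r = c + h * real (idx r))"
  defines "A \<equiv> Amat t th1 th2"
      and "S \<equiv> Smat t th1"
      and "Z \<equiv> Zmat CARD('n) t th1 th2 th3"
      and "C \<equiv> (Chat t th1 th2 th3 :: real^('n \<times> 'd)^('n \<times> 'd))"
      and "dC \<equiv> (dChat t th1 th2 th3 :: real^('n \<times> 'd)^('n \<times> 'd))"
      and "s2 \<equiv> sigsq th3"
  shows "((\<lambda>x. logp X t x th2 th3) has_real_derivative
            (1/2) * (X \<bullet> ((inverse (s2^2) *\<^sub>R kron (Jmat :: real^'n^'n) (Z ** hadamard A S ** Z)) *v X))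
            - (1/2) * trace (matrix_inv C ** dC)) (at th1)
       \<and> trace (matrix_inv C ** dC) =
            inverse s2 * real CARD('n) * (\<Sum>i\<in>UNIV. hadamard A S $ i $ i)
            - inverse s2 * real CARD('n) * (\<Sum>i\<in>UNIV. \<Sum>j\<in>UNIV. hadamard (mat 1 - Z) (hadamard A S) $ i $ j)"
proof -
  let ?J = "Jmat :: real^'n^'n"
  let ?N = "real CARD('n)"
  define B where "B = hadamard A S"
  define CC where "CC = (\<lambda>x. (Chat t x th2 th3 :: real^('n \<times> 'd)^('n \<times> 'd)))"
  have s2: "s2 > 0" unfolding s2_def sigsq_def by simp
  have CCx: "CC x = s2 *\<^sub>R mat 1 + kron ?J (Amat t x th2)" for x
    unfolding CC_def Chat_def s2_def ..
  have der: "((\<lambda>x. CC x $ p $ q) has_real_derivative kron ?J B $ p $ q) (at th1)" for p q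
    unfolding CC_def B_def A_def S_def by (rule Chat_entry_deriv)
  have dC: "dC = kron ?J B"
    unfolding dC_def dChat_def using der unfolding CC_def
    by (simp add: vec_eq_iff DERIV_imp_deriv)
  have pdC: "v \<bullet> (CC x *v v) > 0" if "v \<noteq> 0" for v x
  proof -
    have "v \<bullet> (CC x *v v) = s2 * (v \<bullet> v) + v \<bullet> (kron ?J (Amat t x th2) *v v)"
      unfolding CCx by (simp add: matrix_vector_mult_add_rdistrib inner_add_right scaleR_mv)
    moreover have "v \<bullet> (kron ?J (Amat t x th2) *v v) \<ge> 0" unfolding kron_quad by (rule Amat_psd)
    moreover have "v \<bullet> v > 0" using that by simp
    ultimately show ?thesis using s2 by (simp add: add_pos_nonneg)
  qed
  have invC: "invertible (CC x)" for x by (rule posdef_invertible[OF pdC])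
  have detpos: "det (CC th1) > 0" by (rule posdef_det_pos[OF pdC])
  have invW: "invertible (mat 1 + (?N / s2) *\<^sub>R A)"
  proof (rule posdef_invertible)
    fix v :: "real^'d" assume "v \<noteq> 0"
    then have "v \<bullet> v > 0" by simp
    moreover have "v \<bullet> (A *v v) \<ge> 0" unfolding A_def by (rule Amat_psd)
    moreover have "?N / s2 \<ge> 0" using s2 by simp
    ultimately have "0 \<le> ?N / s2 * (v \<bullet> (A *v v))" "v \<bullet> v > 0"
      using mult_nonneg_nonneg by blast+
    moreover have "v \<bullet> ((mat 1 + (?N / s2) *\<^sub>R A) *v v) = v \<bullet> v + ?N / s2 * (v \<bullet> (A *v v))"
      by (simp add: matrix_vector_mult_add_rdistrib inner_add_right scaleR_mv)
    ultimately show "v \<bullet> ((mat 1 + (?N / s2) *\<^sub>R A) *v v) > 0" by linarith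
  qed
  have Zdef: "Z = matrix_inv (mat 1 + (?N / s2) *\<^sub>R A)"
    unfolding Z_def Zmat_def A_def s2_def ..
  have Cdef: "C = s2 *\<^sub>R mat 1 + kron ?J A" unfolding C_def A_def s2_def Chat_def ..
  note F = Cinv_formula[OF s2 invW, folded Zdef, folded Cdef]
  let ?Ci = "matrix_inv C"
  have CC1: "CC th1 = C" unfolding CC_def C_def ..
  have dinv: "((\<lambda>y. matrix_inv (CC y) $ p $ q) has_real_derivative (- (?Ci ** dC ** ?Ci)) $ p $ q) (at th1)" for p q
    using inv_has_deriv[of CC "kron ?J B" th1, OF der invC] unfolding CC1 dC .
  have dinv2: "((\<lambda>y. matrix_inv (CC y) $ p $ q * X $ q) has_real_derivative (- (?Ci ** dC ** ?Ci)) $ p $ q * X $ q) (at th1)" for p q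
    by (rule DERIV_cmult_right[OF dinv])
  have dquad: "((\<lambda>y. X \<bullet> (matrix_inv (CC y) *v X)) has_real_derivative X \<bullet> ((- (?Ci ** dC ** ?Ci)) *v X)) (at th1)"
    unfolding inner_vec_def matrix_vector_mult_def
    by (simp only: vec_lambda_beta inner_real_def, intro DERIV_sum DERIV_cmult dinv2)
  have dldet: "((\<lambda>y. ln (det (CC y))) has_real_derivative trace (?Ci ** dC)) (at th1)"
  proof -
    have "((\<lambda>y. ln (det (CC y))) has_real_derivative 1 / det (CC th1) * detD (CC th1) (kron ?J B)) (at th1)"
      by (rule DERIV_chain2[OF DERIV_ln_divide[OF detpos] det_has_deriv[OF der]])
    also have "1 / det (CC th1) * detD (CC th1) (kron ?J B) = trace (?Ci ** dC)"
      using jacobi[OF invC[of th1], of "kron ?J B"] detpos unfolding CC1 dC by simp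
    finally show ?thesis .
  qed
  have logp_eq: "(\<lambda>x. logp X t x th2 th3) = (\<lambda>x. - (1/2) * (X \<bullet> (matrix_inv (CC x) *v X))
      - (1/2) * ln (det (CC x)) - (real (CARD('n) * CARD('d)) / 2) * ln (2 * pi))"
    unfolding logp_def CC_def ..
  have d1: "((\<lambda>x. logp X t x th2 th3) has_real_derivative
      - (1/2) * (X \<bullet> ((- (?Ci ** dC ** ?Ci)) *v X)) - (1/2) * trace (?Ci ** dC) - 0) (at th1)"
    unfolding logp_eq by (intro DERIV_diff DERIV_cmult dquad dldet DERIV_const)
  have M: "?Ci ** dC ** ?Ci = inverse (s2^2) *\<^sub>R kron ?J (Z ** B ** Z)"
  proof -
    have "?Ci ** dC ** ?Ci = kron ?J (inverse (s2^2) *\<^sub>R (Z ** B ** Z))"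
      unfolding dC F(1) by (rule F(3))
    then show ?thesis by (simp only: kron_scale_in)
  qed
  have part1: "((\<lambda>x. logp X t x th2 th3) has_real_derivative
            (1/2) * (X \<bullet> ((inverse (s2^2) *\<^sub>R kron ?J (Z ** hadamard A S ** Z)) *v X))
            - (1/2) * trace (matrix_inv C ** dC)) (at th1)"
    using d1 unfolding M B_def by (simp add: neg_mv)
  have Bsym: "B $ i $ j = B $ j $ i" for i j
    unfolding B_def A_def S_def hadamard_def Amat_def Smat_def by (simp add: power2_commute)
  have "trace (?Ci ** dC) = ?N * (inverse s2 * trace (Z ** B))"
  proof -
    have "?Ci ** dC = kron ?J (inverse s2 *\<^sub>R (Z ** B))"
      unfolding dC F(1) by (rule F(2))
    then have "trace (?Ci ** dC) = ?N * trace (inverse s2 *\<^sub>R (Z ** B))"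
      by (simp only: trace_kron trace_Jmat)
    then show ?thesis by (simp add: trace_def sum_distrib_left)
  qed
  also have "trace (Z ** B) = (\<Sum>i\<in>UNIV. \<Sum>j\<in>UNIV. Z $ i $ j * B $ i $ j)"
    unfolding trace_def matrix_matrix_mult_def using Bsym by simp
  also have "\<dots> = (\<Sum>i\<in>UNIV. B $ i $ i) - (\<Sum>i\<in>UNIV. \<Sum>j\<in>UNIV. hadamard (mat 1 - Z) B $ i $ j)"
  proof -
    have "(\<Sum>i\<in>UNIV. \<Sum>j\<in>UNIV. hadamard (mat 1 - Z) B $ i $ j) =
        (\<Sum>i\<in>UNIV. \<Sum>j\<in>UNIV. (if i = j then B $ i $ j else 0) - Z $ i $ j * B $ i $ j)"
      by (intro sum.cong refl) (auto simp: hadamard_def mat_def left_diff_distrib)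
    also have "\<dots> = (\<Sum>i\<in>UNIV. B $ i $ i) - (\<Sum>i\<in>UNIV. \<Sum>j\<in>UNIV. Z $ i $ j * B $ i $ j)"
      by (simp add: sum_subtractf)
    finally show ?thesis by simp
  qed
  finally have part2: "trace (?Ci ** dC) = inverse s2 * ?N * (\<Sum>i\<in>UNIV. hadamard A S $ i $ i)
            - inverse s2 * ?N * (\<Sum>i\<in>UNIV. \<Sum>j\<in>UNIV. hadamard (mat 1 - Z) (hadamard A S) $ i $ j)"
    unfolding B_def by (simp add: algebra_simps)
  show ?thesis using part1 part2 by blast
qed

end
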